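(* Let $n\ge1$ and let $\mathcal{G}=(\mathcal{V},\mathcal{E})$ be the multigraph with vertex set $\mathcal{V}=\{0,\ldots,n\}$ and, for each $i\in\{1,\dots,n\}$, exactly two parallel edges $e_i^{(0)},e_i^{(1)}$ between vertices $i-1$ and $i$ (and no other edges). Let $\epsilon,\delta\ge0$ and $\alpha\ge0$, and let $\mathcal{A}$ be an algorithm that is $(\epsilon,\delta)$-differentially private on $\mathcal{G}$ and that on every input edge weights $w:\mathcal{E}\to\{0,1\}$ produces a path from $s=0$ to $t=n$ with expected approximation error at most $\alpha$. Then there exists a $(2\epsilon,(1+e^{\epsilon})\delta)$-differentially private algorithm $\mathcal{B}$ which on every input $x\in\{0,1\}^n$ produces $y\in\{0,1\}^n$ such that the expected Hamming distance $d_H(x,y)$ is at most $\alpha$.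
   Context: Private edge weight model: for a graph $\mathcal{G}=(\mathcal{V},\mathcal{E})$, a weight function is $w:\mathcal{E}\to\mathbb{R}^+$ (nonnegative reals). Two weight functions $w,w'$ are neighboring if $\sum_{e\in\mathcal{E}}|w(e)-w'(e)|\le 1$. A randomized algorithm $\mathcal{A}$ on weight functions is $(\epsilon,\delta)$-differentially private on $\mathcal{G}$ if for all neighboring $w,w'$ and all sets $S$ of outputs, $\Pr[\mathcal{A}(w)\in S]\le e^{\epsilon}\Pr[\mathcal{A}(w')\in S]+\delta$. The approximation error of a path $P$ from $s$ to $t$ is $w(P)-d_w(s,t)$, where $w(P)$ is the sum of the edge weights on $P$ and $d_w(s,t)$ is the minimum such weight over paths from $s$ to $t$. A randomized algorithm $\mathcal{B}$ with inputs in $\{0,1\}^n$ is $(\epsilon',\delta')$-differentially private if for all $x,x'\in\{0,1\}^n$ differing in exactly one coordinate and all sets $S$ of outputs, $\Pr[\mathcal{B}(x)\in S]\le e^{\epsilon'}\Pr[\mathcal{B}(x')\in S]+\delta'$. $d_H$ denotes Hamming distance. *)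

theory Defs
  imports "HOL-Probability.Probability"
begin

text \<open>The multigraph on vertices 0..n: edge (i,b), 1 \<le> i \<le> n, b :: bool, is the
  b-th of the two parallel edges between vertices i-1 and i.\<close>
definition edges :: "nat \<Rightarrow> (nat \<times> bool) set" where
  "edges n = {1..n} \<times> UNIV"

definition connects :: "nat \<times> bool \<Rightarrow> nat \<Rightarrow> nat \<Rightarrow> bool" where
  "connects e u v \<longleftrightarrow> {u, v} = {fst e - 1, fst e}"

definition is_path :: "nat \<Rightarrow> (nat \<times> bool) list \<Rightarrow> nat \<Rightarrow> nat \<Rightarrow> bool" where
  "is_path n P s t \<longleftrightarrow>
     (\<exists>vs. length vs = length P + 1 \<and> hd vs = s \<and> last vs = t \<and> distinct vs \<and>
       (\<forall>j < length P. P ! j \<in> edges n \<and> connects (P ! j) (vs ! j) (vs ! Suc j)))"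

definition path_weight :: "(nat \<times> bool \<Rightarrow> real) \<Rightarrow> (nat \<times> bool) list \<Rightarrow> real" where
  "path_weight w P = sum_list (map w P)"

definition sp_dist :: "nat \<Rightarrow> (nat \<times> bool \<Rightarrow> real) \<Rightarrow> nat \<Rightarrow> nat \<Rightarrow> real" where
  "sp_dist n w s t = Inf {path_weight w P | P. is_path n P s t}"

definition is_weight :: "nat \<Rightarrow> (nat \<times> bool \<Rightarrow> real) \<Rightarrow> bool" where
  "is_weight n w \<longleftrightarrow> (\<forall>e\<in>edges n. 0 \<le> w e) \<and> (\<forall>e. e \<notin> edges n \<longrightarrow> w e = 0)"

definition neighboring :: "nat \<Rightarrow> (nat \<times> bool \<Rightarrow> real) \<Rightarrow> (nat \<times> bool \<Rightarrow> real) \<Rightarrow> bool" where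
  "neighboring n w w' \<longleftrightarrow> (\<Sum>e\<in>edges n. \<bar>w e - w' e\<bar>) \<le> 1"

definition dp_graph :: "nat \<Rightarrow> real \<Rightarrow> real \<Rightarrow> ((nat \<times> bool \<Rightarrow> real) \<Rightarrow> 'b pmf) \<Rightarrow> bool" where
  "dp_graph n \<epsilon> \<delta> A \<longleftrightarrow>
     (\<forall>w w'. is_weight n w \<and> is_weight n w' \<and> neighboring n w w' \<longrightarrow>
        (\<forall>S. measure_pmf.prob (A w) S \<le> exp \<epsilon> * measure_pmf.prob (A w') S + \<delta>))"

definition hamming :: "bool list \<Rightarrow> bool list \<Rightarrow> nat" where
  "hamming x y = card {i. i < length x \<and> x ! i \<noteq> y ! i}"

definition dp_bits :: "nat \<Rightarrow> real \<Rightarrow> real \<Rightarrow> (bool list \<Rightarrow> 'b pmf) \<Rightarrow> bool" where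
  "dp_bits n \<epsilon> \<delta> B \<longleftrightarrow>
     (\<forall>x x'. length x = n \<and> length x' = n \<and> hamming x x' = 1 \<longrightarrow>
        (\<forall>S. measure_pmf.prob (B x) S \<le> exp \<epsilon> * measure_pmf.prob (B x') S + \<delta>))"

end

theory Submission
  imports Defs
begin

lemma path_vs_le:
  assumes "length vs = length P + 1" "last vs = t" "t \<le> n"
    and "\<forall>j < length P. P ! j \<in> edges n \<and> connects (P ! j) (vs ! j) (vs ! Suc j)"
  shows "\<forall>v\<in>set vs. v \<le> n"
proof
  fix v assume "v \<in> set vs"
  then obtain k where k: "k < length vs" "vs ! k = v" by (auto simp: in_set_conv_nth)
  show "v \<le> n"
  proof (cases "k < length P")
    case True
    with assms(4) have "P ! k \<in> edges n" "connects (P ! k) (vs ! k) (vs ! Suc k)" by auto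
    then show ?thesis using k unfolding edges_def connects_def by (auto simp: doubleton_eq_iff)
  next
    case False
    then have "k = length vs - 1" using k assms(1) by auto
    moreover have "vs \<noteq> []" using assms(1) by auto
    ultimately show ?thesis using k assms by (simp add: last_conv_nth)
  qed
qed

lemma path_length_le:
  assumes "is_path n P 0 n" shows "length P \<le> n"
proof -
  obtain vs where vs: "length vs = length P + 1" "hd vs = 0" "last vs = n" "distinct vs"
    "\<forall>j < length P. P ! j \<in> edges n \<and> connects (P ! j) (vs ! j) (vs ! Suc j)"
    using assms unfolding is_path_def by blast
  have "set vs \<subseteq> {0..n}" using path_vs_le[OF vs(1) vs(3) order_refl vs(5)] by auto
  then have "card (set vs) \<le> card {0..n}" by (intro card_mono) auto
  with distinct_card[OF vs(4)] vs(1) show ?thesis by simp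
qed

lemma path_crosses:
  assumes "is_path n P 0 n" "1 \<le> i" "i \<le> n" shows "\<exists>b. (i, b) \<in> set P"
proof -
  obtain vs where vs: "length vs = length P + 1" "hd vs = 0" "last vs = n" "distinct vs"
    "\<forall>j < length P. P ! j \<in> edges n \<and> connects (P ! j) (vs ! j) (vs ! Suc j)"
    using assms unfolding is_path_def by blast
  have ne: "vs \<noteq> []" using vs(1) by auto
  have lastn: "vs ! length P = n" using vs(1,3) ne by (simp add: last_conv_nth)
  have v0: "vs ! 0 = 0" using vs(2) ne by (simp add: hd_conv_nth)
  define j where "j = (LEAST j. i \<le> vs ! j)"
  have ij: "i \<le> vs ! j" unfolding j_def by (rule LeastI[of _ "length P"]) (simp add: lastn assms)
  have jle: "j \<le> length P" unfolding j_def by (rule Least_le) (simp add: lastn assms)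
  have "j \<noteq> 0" proof assume "j = 0" then show False using ij v0 assms(2) by simp qed
  then obtain k where jk: "j = Suc k" by (cases j) auto
  have "\<not> i \<le> vs ! k" unfolding j_def
    using not_less_Least[of k "\<lambda>j. i \<le> vs ! j"] jk j_def by auto
  moreover have kl: "k < length P" using jle jk by auto
  ultimately have lt: "vs ! k < i" by auto
  from vs(5) kl have "P ! k \<in> edges n" "connects (P ! k) (vs ! k) (vs ! Suc k)" by auto
  then have "fst (P ! k) = i" using lt ij jk unfolding edges_def connects_def
    by (auto simp: doubleton_eq_iff)
  then have "(i, snd (P ! k)) \<in> set P" using kl
    by (metis nth_mem prod.collapse)
  then show ?thesis by blast
qed

lemma sum_set_le_sum_list:
  fixes w :: "'a \<Rightarrow> real"
  shows "(\<forall>x\<in>set xs. 0 \<le> w x) \<Longrightarrow> sum w (set xs) \<le> sum_list (map w xs)"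
proof (induction xs)
  case Nil then show ?case by simp
next
  case (Cons a xs)
  have "sum w (set (a # xs)) \<le> w a + sum w (set xs)"
  proof (cases "a \<in> set xs")
    case True
    then show ?thesis using Cons.prems by (simp add: insert_absorb)
  next
    case False then show ?thesis by simp
  qed
  then show ?case using Cons by simp
qed

definition W :: "nat \<Rightarrow> bool list \<Rightarrow> nat \<times> bool \<Rightarrow> real" where
  "W n x e = (if fst e \<in> {1..n} \<and> snd e \<noteq> x ! (fst e - 1) then 1 else 0)"

definition fP :: "nat \<Rightarrow> (nat \<times> bool) list \<Rightarrow> bool list" where
  "fP n P = map (\<lambda>i. (Suc i, True) \<in> set P) [0..<n]"

lemma W_weight: "is_weight n (W n x)" "\<forall>e\<in>edges n. W n x e \<in> {0,1}"
  unfolding is_weight_def W_def edges_def by auto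

lemma hamming_le:
  assumes "length x = n" "is_path n P 0 n"
  shows "real (hamming x (fP n P)) \<le> path_weight (W n x) P"
proof -
  define I where "I = {i. i < length x \<and> x ! i \<noteq> fP n P ! i}"
  define g where "g i = (Suc i, \<not> x ! i)" for i
  have inj: "inj_on g I" unfolding g_def inj_on_def by auto
  have sub: "g ` I \<subseteq> set P"
  proof
    fix e assume "e \<in> g ` I"
    then obtain i where i: "i \<in> I" "e = g i" by auto
    then have il: "i < n" and ne: "x ! i \<noteq> ((Suc i, True) \<in> set P)"
      using assms(1) unfolding I_def fP_def by auto
    show "e \<in> set P"
    proof (cases "x ! i")
      case True
      then have "(Suc i, True) \<notin> set P" using ne by auto
      moreover obtain b where "(Suc i, b) \<in> set P" using path_crosses[OF assms(2), of "Suc i"] il by auto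
      ultimately show ?thesis using i True g_def by (cases b) auto
    next
      case False
      then show ?thesis using ne i g_def by auto
    qed
  qed
  have W1: "\<forall>i\<in>I. W n x (g i) = 1" unfolding I_def g_def W_def using assms(1) by auto
  have "real (hamming x (fP n P)) = real (card I)" unfolding hamming_def I_def by simp
  also have "\<dots> = sum (W n x) (g ` I)"
    using sum.reindex[OF inj, of "W n x"] W1 by simp
  also have "\<dots> \<le> sum (W n x) (set P)"
    by (rule sum_mono2[OF finite_set sub]) (simp add: W_def)
  also have "\<dots> \<le> path_weight (W n x) P"
    unfolding path_weight_def by (rule sum_set_le_sum_list) (simp add: W_def)
  finally show ?thesis .
qed

lemma sp_le0:
  assumes "length x = n" shows "sp_dist n (W n x) 0 n \<le> 0"
proof -
  define P0 where "P0 = map (\<lambda>i. (Suc i, x ! i)) [0..<n]"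
  have "is_path n P0 0 n" unfolding is_path_def
  proof (intro exI[of _ "[0..<Suc n]"] conjI allI impI)
    fix j assume "j < length P0"
    then have j: "j < n" by (simp add: P0_def)
    show "P0 ! j \<in> edges n" using j by (simp add: P0_def edges_def)
    show "connects (P0 ! j) ([0..<Suc n] ! j) ([0..<Suc n] ! Suc j)"
      using j by (simp add: P0_def connects_def nth_upt del: upt_Suc)
  next
    show "length [0..<Suc n] = length P0 + 1" by (simp add: P0_def)
  next
    show "hd [0..<Suc n] = 0" by (simp only: hd_upt zero_less_Suc)
  next
    show "last [0..<Suc n] = n" by (simp only: last_upt zero_less_Suc diff_Suc_1)
  next
    show "distinct [0..<Suc n]" by (rule distinct_upt)
  qed
  moreover have "path_weight (W n x) P0 = 0"
  proof -
    have "map (W n x) P0 = map (\<lambda>_. 0) P0" by (rule map_cong[OF refl]) (auto simp: P0_def W_def)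
    then show ?thesis unfolding path_weight_def by (simp only: sum_list_0)
  qed
  ultimately have mem: "0 \<in> {path_weight (W n x) P | P. is_path n P 0 n}" by force
  have "bdd_below {path_weight (W n x) P | P. is_path n P 0 n}"
    by (rule bdd_belowI[of _ 0]) (auto simp: path_weight_def W_def intro!: sum_list_nonneg)
  then show ?thesis unfolding sp_dist_def using cInf_lower[OF mem] by simp
qed

lemma hamming1:
  assumes "length x = n" "length x' = n" "hamming x x' = 1"
  obtains i where "i < n" "x ! i \<noteq> x' ! i" "\<And>j. j < n \<Longrightarrow> j \<noteq> i \<Longrightarrow> x ! j = x' ! j"
proof -
  from assms(3) have "card {i. i < length x \<and> x ! i \<noteq> x' ! i} = 1"
    unfolding hamming_def .
  then obtain i where "{i. i < length x \<and> x ! i \<noteq> x' ! i} = {i}"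
    by (rule card_1_singletonE)
  note Ii = this
  have "i \<in> {i. i < length x \<and> x ! i \<noteq> x' ! i}" using Ii by simp
  then have "i < n" "x ! i \<noteq> x' ! i" using assms(1) by auto
  moreover have "x ! j = x' ! j" if "j < n" "j \<noteq> i" for j
  proof (rule ccontr)
    assume "x ! j \<noteq> x' ! j"
    then have "j \<in> {i. i < length x \<and> x ! i \<noteq> x' ! i}" using that assms(1) by simp
    then have "j \<in> {i}" by (simp only: Ii)
    then show False using that by simp
  qed
  ultimately show ?thesis using that by blast
qed

lemma neighbor_bound:
  assumes "i < n" "\<And>e. \<bar>w e - w' e\<bar> \<le> (if e = (Suc i, b) then 1 else 0)"
  shows "neighboring n w w'"
proof -
  have fin: "finite (edges n)" unfolding edges_def by simp
  have "(\<Sum>e\<in>edges n. \<bar>w e - w' e\<bar>) \<le> (\<Sum>e\<in>edges n. if e = (Suc i, b) then 1 else 0)"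
    by (rule sum_mono) (rule assms(2))
  also have "\<dots> = 1" using fin assms(1) by (simp add: edges_def)
  finally show ?thesis unfolding neighboring_def .
qed

theorem lemma5p2:
  fixes n :: nat and \<epsilon> \<delta> \<alpha> :: real
    and A :: "(nat \<times> bool \<Rightarrow> real) \<Rightarrow> (nat \<times> bool) list pmf"
  assumes "n \<ge> 1" and "\<epsilon> \<ge> 0" and "\<delta> \<ge> 0" and "\<alpha> \<ge> 0"
    and "dp_graph n \<epsilon> \<delta> A"
    and "\<forall>w. is_weight n w \<and> (\<forall>e\<in>edges n. w e \<in> {0, 1}) \<longrightarrow>
           (\<forall>P\<in>set_pmf (A w). is_path n P 0 n) \<and>
           measure_pmf.expectation (A w) (\<lambda>P. path_weight w P - sp_dist n w 0 n) \<le> \<alpha>"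
  shows "\<exists>B :: bool list \<Rightarrow> bool list pmf.
           dp_bits n (2 * \<epsilon>) ((1 + exp \<epsilon>) * \<delta>) B \<and>
           (\<forall>x. length x = n \<longrightarrow>
              (\<forall>y\<in>set_pmf (B x). length y = n) \<and>
              measure_pmf.expectation (B x) (\<lambda>y. real (hamming x y)) \<le> \<alpha>)"
proof (intro exI[of _ "\<lambda>x. map_pmf (fP n) (A (W n x))"] conjI allI impI)
  show "dp_bits n (2 * \<epsilon>) ((1 + exp \<epsilon>) * \<delta>) (\<lambda>x. map_pmf (fP n) (A (W n x)))"
    unfolding dp_bits_def
  proof (intro allI impI)
    fix x x' :: "bool list" and S
    assume h: "length x = n \<and> length x' = n \<and> hamming x x' = 1"
    then have h1: "length x = n" "length x' = n" "hamming x x' = 1" by auto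
    obtain i where i: "i < n" "x ! i \<noteq> x' ! i"
      and oth: "\<And>j. j < n \<Longrightarrow> j \<noteq> i \<Longrightarrow> x ! j = x' ! j"
      by (rule hamming1[OF h1]) blast
    define w2 where "w2 e = (if fst e = Suc i then 0 else W n x e)" for e
    have eq: "W n x e = W n x' e" if "fst e \<noteq> Suc i" for e
    proof (cases "fst e \<in> {1..n}")
      case True
      then have "x ! (fst e - 1) = x' ! (fst e - 1)" using that by (intro oth) auto
      then show ?thesis unfolding W_def by simp
    next
      case False then show ?thesis unfolding W_def by auto
    qed
    have w2w: "is_weight n w2"
      using W_weight(1)[of n x] unfolding is_weight_def w2_def by simp
    have n1: "neighboring n (W n x) w2"
    proof (rule neighbor_bound[OF i(1), where b = "\<not> x ! i"])
      fix e :: "nat \<times> bool"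
      show "\<bar>W n x e - w2 e\<bar> \<le> (if e = (Suc i, \<not> x ! i) then 1 else 0)"
      proof (cases "fst e = Suc i")
        case True
        obtain a b where e: "e = (a, b)" by (cases e)
        with True have a: "a = Suc i" by simp
        show ?thesis using i(1) unfolding e a
          by (cases "b = x ! i") (simp_all add: w2_def W_def)
      next
        case False then show ?thesis by (simp add: w2_def)
      qed
    qed
    have n2: "neighboring n w2 (W n x')"
    proof (rule neighbor_bound[OF i(1), where b = "\<not> x' ! i"])
      fix e :: "nat \<times> bool"
      show "\<bar>w2 e - W n x' e\<bar> \<le> (if e = (Suc i, \<not> x' ! i) then 1 else 0)"
      proof (cases "fst e = Suc i")
        case True
        obtain a b where e: "e = (a, b)" by (cases e)
        with True have a: "a = Suc i" by simp
        show ?thesis using i(1) unfolding e a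
          by (cases "b = x' ! i") (simp_all add: w2_def W_def)
      next
        case False then show ?thesis using eq[OF False] by (simp add: w2_def)
      qed
    qed
    let ?T = "fP n -` S"
    have dp: "\<And>w w' S. is_weight n w \<Longrightarrow> is_weight n w' \<Longrightarrow> neighboring n w w' \<Longrightarrow>
        measure_pmf.prob (A w) S \<le> exp \<epsilon> * measure_pmf.prob (A w') S + \<delta>"
      using assms(5) unfolding dp_graph_def by simp
    have c1: "measure_pmf.prob (A (W n x)) ?T \<le> exp \<epsilon> * measure_pmf.prob (A w2) ?T + \<delta>"
      by (rule dp[OF W_weight(1) w2w n1])
    have c2: "measure_pmf.prob (A w2) ?T \<le> exp \<epsilon> * measure_pmf.prob (A (W n x')) ?T + \<delta>"
      by (rule dp[OF w2w W_weight(1) n2])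
    have "measure_pmf.prob (A (W n x)) ?T
        \<le> exp \<epsilon> * (exp \<epsilon> * measure_pmf.prob (A (W n x')) ?T + \<delta>) + \<delta>"
      by (rule order.trans[OF c1 add_right_mono[OF mult_left_mono[OF c2]]]) simp
    also have "\<dots> = exp (2 * \<epsilon>) * measure_pmf.prob (A (W n x')) ?T + (1 + exp \<epsilon>) * \<delta>"
    proof -
      have "2 * \<epsilon> = \<epsilon> + \<epsilon>" by simp
      then have ee: "exp (2 * \<epsilon>) = exp \<epsilon> * exp \<epsilon>" by (simp only: exp_add)
      show ?thesis unfolding ee by (simp add: distrib_left distrib_right mult.assoc)
    qed
    finally show "measure_pmf.prob (map_pmf (fP n) (A (W n x))) S
        \<le> exp (2 * \<epsilon>) * measure_pmf.prob (map_pmf (fP n) (A (W n x'))) S + (1 + exp \<epsilon>) * \<delta>"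
      unfolding measure_map_pmf .
  qed
next
  fix x :: "bool list" assume lx: "length x = n"
  show "\<forall>y\<in>set_pmf (map_pmf (fP n) (A (W n x))). length y = n"
    by (auto simp: fP_def)
  have AE: "(\<forall>P\<in>set_pmf (A (W n x)). is_path n P 0 n) \<and>
      measure_pmf.expectation (A (W n x)) (\<lambda>P. path_weight (W n x) P - sp_dist n (W n x) 0 n) \<le> \<alpha>"
    using mp[OF spec[OF assms(6), of "W n x"] conjI[OF W_weight(1) W_weight(2)]] .
  have A: "\<forall>P\<in>set_pmf (A (W n x)). is_path n P 0 n" using AE by (rule conjunct1)
  have E: "measure_pmf.expectation (A (W n x)) (\<lambda>P. path_weight (W n x) P - sp_dist n (W n x) 0 n) \<le> \<alpha>"
    using AE by (rule conjunct2)
  let ?g = "\<lambda>P. path_weight (W n x) P - sp_dist n (W n x) 0 n"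
  have bnd: "\<bar>path_weight (W n x) P\<bar> \<le> real n" if "is_path n P 0 n" for P
  proof -
    have "0 \<le> path_weight (W n x) P" unfolding path_weight_def
      by (auto simp: W_def intro!: sum_list_nonneg)
    moreover have "path_weight (W n x) P \<le> sum_list (map (\<lambda>_. 1::real) P)"
      unfolding path_weight_def by (rule sum_list_mono) (simp add: W_def)
    moreover have "sum_list (map (\<lambda>_. 1::real) P) = real (length P)"
      by (induction P) auto
    ultimately show ?thesis using path_length_le[OF that] by linarith
  qed
  have int: "integrable (measure_pmf (A (W n x))) ?g"
  proof (rule measure_pmf.integrable_const_bound[where B = "real n + \<bar>sp_dist n (W n x) 0 n\<bar>"])
    show "AE P in measure_pmf (A (W n x)). norm (?g P) \<le> real n + \<bar>sp_dist n (W n x) 0 n\<bar>"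
      unfolding AE_measure_pmf_iff real_norm_def
    proof
      fix P assume "P \<in> set_pmf (A (W n x))"
      then have "\<bar>path_weight (W n x) P\<bar> \<le> real n" using A bnd by blast
      then show "\<bar>?g P\<bar> \<le> real n + \<bar>sp_dist n (W n x) 0 n\<bar>" by linarith
    qed
  qed simp
  have int2: "integrable (measure_pmf (A (W n x))) (\<lambda>P. real (hamming x (fP n P)))"
  proof (rule measure_pmf.integrable_const_bound[where B = "real n"])
    show "AE P in measure_pmf (A (W n x)). norm (real (hamming x (fP n P))) \<le> real n"
    proof (rule AE_I2)
      fix P
      have "hamming x (fP n P) \<le> card {..<n}" unfolding hamming_def using lx
        by (intro card_mono) auto
      then show "norm (real (hamming x (fP n P))) \<le> real n" by simp
    qed
  qed simp
  have "measure_pmf.expectation (map_pmf (fP n) (A (W n x))) (\<lambda>y. real (hamming x y))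
      = measure_pmf.expectation (A (W n x)) (\<lambda>P. real (hamming x (fP n P)))"
    by (simp add: integral_map_pmf)
  also have "\<dots> \<le> measure_pmf.expectation (A (W n x)) ?g"
  proof (rule integral_mono_AE[OF int2 int])
    show "AE P in measure_pmf (A (W n x)). real (hamming x (fP n P)) \<le> ?g P"
      unfolding AE_measure_pmf_iff
    proof
      fix P assume "P \<in> set_pmf (A (W n x))"
      then have "is_path n P 0 n" using A by blast
      from hamming_le[OF lx this] sp_le0[OF lx]
      show "real (hamming x (fP n P)) \<le> ?g P" by linarith
    qed
  qed
  also have "\<dots> \<le> \<alpha>" by (rule E)
  finally show "measure_pmf.expectation (map_pmf (fP n) (A (W n x))) (\<lambda>y. real (hamming x y)) \<le> \<alpha>" .
qed

end
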